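(* Consider the hard instance $G_{k,m}$ described in the context, and run Water-Filling on it. There is $k_0$ such that for all $k\ge k_0$ and all $m$, the resulting passive water-levels satisfy $p_{u_{t,i}}<1$ for all $t\in[m]$, $i\in[k]$, and $p_{v_{t,i}}<1$ for all $t\in[m-1]$, $i\in[k]$.
   Context: Fully online fractional matching model: an undirected graph is revealed online; each step is the arrival or the deadline of a vertex; at arrival, edges to previously arrived vertices are revealed; every neighbor of $v$ arrives before $v$'s deadline. The algorithm maintains $x_{uv}\ge 0$ with water-level $x_w:=\sum_{z}x_{wz}\le1$; $x_{uv}$ (with $u$ having the earlier deadline) may only be increased at $u$'s deadline. Water-Filling: at the deadline of $u$, with $N(u)$ the neighbors of $u$ whose deadlines have not been reached, while $x_u<1$ and $\min_{v\in N(u)}x_v<1$, continuously increase $x_{uv}$ at equal rates for all $v\in\arg\min_{v\in N(u)}x_v$. The passive water-level $p_w$ of a vertex $w$ is its water-level $x_w$ immediately before $w$'s deadline. Let $c=2-\sqrt2$, $f(x)=\tfrac12(\ln(1-x)+\ln(1-c+x))+\frac{1}{\sqrt2(x-1)}+\frac{2+\sqrt2-\ln(1-c)}{2}$ on $[0,c]$ (a strictly decreasing bijection onto $[0,1]$), and $h(x)=f(c-f^{-1}(x))$ for $x\in[0,1]$. Hard instance $G_{k,m}$: vertex set $\bigcup_{t\in[m]}(U_t\cup V_t)$ with $U_t=\{u_{t,1},\dots,u_{t,k}\}$, $V_t=\{v_{t,1},\dots,v_{t,k}\}$. Edges: $(u_{t,i},v_{t,j})$ for all $t\in[m]$, $i\in[k]$,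 $j\ge i$; and $(u_{t,i},u_{t+1,j})$ for all $t\in[m-1]$, $i\in[k]$, $1\le j\le\lfloor k\,h(\tfrac{i-1}{k})\rfloor$. All vertices arrive before any deadline. The deadlines of the $u$-vertices come first, in lexicographic order of $(t,i)$; afterwards the deadlines of all $v$-vertices are reached (in any order). *)

theory Defs
  imports Complex_Main
begin

text \<open>A state is the vector of water-levels x_w.  At the deadline of u, with
N the set of neighbours of u whose deadline has not been reached, the continuous
Water-Filling process raises the levels of the lowest neighbours at equal rates
until either x_u reaches 1 or all neighbours reach 1.  Its outcome is described
by a threshold level L: neighbour v ends at max (x v) L, i.e. receives the
increment max 0 (L - x v).\<close>

definition wf_incr :: "('a \<Rightarrow> real) \<Rightarrow> 'a set \<Rightarrow> real \<Rightarrow> 'a \<Rightarrow> real" where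
  "wf_incr x N a v =
     (if a \<le> 0 then 0
      else if (\<Sum>w\<in>N. 1 - x w) \<le> a then 1 - x v
      else max 0 ((THE L. (\<Sum>w\<in>N. max 0 (L - x w)) = a) - x v))"

definition wf_step :: "('a \<Rightarrow> real) \<Rightarrow> 'a \<Rightarrow> 'a set \<Rightarrow> ('a \<Rightarrow> real)" where
  "wf_step x u N =
     (let d = wf_incr x N (1 - x u) in
      (\<lambda>w. if w \<in> N then x w + d w
           else if w = u then x u + (\<Sum>v\<in>N. d v) else x w))"

text \<open>Passive water-level of w: processing the deadline sequence in order,
the level of w immediately before its own deadline.  Vertices still in the list
are exactly those whose deadline has not been reached.\<close>
fun wf_pass :: "('a \<Rightarrow> 'a \<Rightarrow> bool) \<Rightarrow> 'a list \<Rightarrow> ('a \<Rightarrow> real) \<Rightarrow> 'a \<Rightarrow> real" where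
  "wf_pass adj [] x w = x w"
| "wf_pass adj (u # rest) x w =
     (if w = u then x u
      else wf_pass adj rest (wf_step x u {v \<in> set rest. adj u v}) w)"

definition cc :: real where "cc = 2 - sqrt 2"

definition ff :: "real \<Rightarrow> real" where
  "ff x = (ln (1 - x) + ln (1 - cc + x)) / 2 + 1 / (sqrt 2 * (x - 1))
          + (2 + sqrt 2 - ln (1 - cc)) / 2"

definition ff_inv :: "real \<Rightarrow> real" where
  "ff_inv y = (THE x. x \<in> {0..cc} \<and> ff x = y)"

definition hh :: "real \<Rightarrow> real" where
  "hh x = ff (cc - ff_inv x)"

datatype hvtx = U nat nat | V nat nat

fun hard_edge :: "nat \<Rightarrow> nat \<Rightarrow> hvtx \<Rightarrow> hvtx \<Rightarrow> bool" where
  "hard_edge k m (U t i) (V t' j) =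
     (t' = t \<and> 1 \<le> t \<and> t \<le> m \<and> 1 \<le> i \<and> i \<le> k \<and> i \<le> j \<and> j \<le> k)"
| "hard_edge k m (U t i) (U t' j) =
     (t' = t + 1 \<and> 1 \<le> t \<and> t + 1 \<le> m \<and> 1 \<le> i \<and> i \<le> k \<and> 1 \<le> j \<and>
      real j \<le> of_int \<lfloor>real k * hh ((real i - 1) / real k)\<rfloor>)"
| "hard_edge k m _ _ = False"

definition hard_adj :: "nat \<Rightarrow> nat \<Rightarrow> hvtx \<Rightarrow> hvtx \<Rightarrow> bool" where
  "hard_adj k m a b = (hard_edge k m a b \<or> hard_edge k m b a)"

definition hard_uorder :: "nat \<Rightarrow> nat \<Rightarrow> hvtx list" where
  "hard_uorder k m = concat (map (\<lambda>t. map (\<lambda>i. U t i) [1..<k+1]) [1..<m+1])"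

definition hard_vset :: "nat \<Rightarrow> nat \<Rightarrow> hvtx set" where
  "hard_vset k m = {V t i | t i. 1 \<le> t \<and> t \<le> m \<and> 1 \<le> i \<and> i \<le> k}"

definition hard_pass :: "nat \<Rightarrow> nat \<Rightarrow> hvtx list \<Rightarrow> hvtx \<Rightarrow> real" where
  "hard_pass k m vs w = wf_pass (hard_adj k m) (hard_uorder k m @ vs) (\<lambda>_. 0) w"

end

theory Submission
  imports Defs
begin


lemma s_bounds: "1.414 < sqrt (2::real)" "sqrt (2::real) < 1.415"
proof -
  show "1.414 < sqrt (2::real)" by (rule real_less_rsqrt) (simp add: power2_eq_square)
  have "sqrt (2::real) < sqrt (1.415^2)" by (rule real_sqrt_less_mono) (simp add: power2_eq_square)
  then show "sqrt (2::real) < 1.415" by simp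
qed

lemma cc_bounds: "0.585 < cc" "cc < 0.586" unfolding cc_def using s_bounds by auto

definition Wf :: "real \<Rightarrow> real" where
  "Wf y = 1 + (1/sqrt 2) * (1/(1-y) - 1/(1-cc+y))"

lemma ff_fun: "ff = (\<lambda>x. (ln (1 - x) + ln (1 - cc + x)) / 2 + 1 / (sqrt 2 * (x - 1))
          + (2 + sqrt 2 - ln (1 - cc)) / 2)"
  by (rule ext) (simp add: ff_def)

lemma alg1:
  fixes a b s y :: real
  assumes ss: "s*s = 2" and nz: "a \<noteq> 0" "b \<noteq> 0" "s \<noteq> 0" and ab: "b = s - a"
  shows "(-1/a + 1/b)/2 - 1/(s*a^2) = -(1 + (1/s)*(1/a - 1/b))/a"
proof -
  have ss': "\<And>x. s*(s*x) = 2*x" using ss by (metis mult.assoc)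
  show ?thesis using nz
    apply (simp add: field_simps power2_eq_square)
    apply (simp add: ab algebra_simps ss ss')
    done
qed

lemma ff_deriv:
  assumes "cc - 1 < y" "y < 1"
  shows "(ff has_real_derivative (-(Wf y)/(1-y))) (at y)"
proof -
  have a: "1 - y > 0" "1 - cc + y > 0" using assms by auto
  have d1: "((\<lambda>x. ln (1-x)) has_real_derivative (-1/(1-y))) (at y)"
    using a by (auto intro!: derivative_eq_intros simp: field_simps)
  have d2: "((\<lambda>x. ln (1-cc+x)) has_real_derivative (1/(1-cc+y))) (at y)"
    using a by (auto intro!: derivative_eq_intros simp: field_simps)
  have d3': "((\<lambda>x. 1/(x-1)) has_real_derivative (-1/(1-y)^2)) (at y)"
    using a by (auto intro!: derivative_eq_intros simp: field_simps power2_eq_square)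
  have d3: "((\<lambda>x. 1/(sqrt 2*(x-1))) has_real_derivative (-1/(sqrt 2*(1-y)^2))) (at y)"
    using DERIV_cmult[OF d3', of "1/sqrt 2"] by (simp add: mult.commute)
  have "(ff has_real_derivative ((-1/(1-y) + 1/(1-cc+y))/2 - 1/(sqrt 2*(1-y)^2))) (at y)"
    unfolding ff_fun
    using DERIV_add[OF DERIV_add[OF DERIV_cdivide[OF DERIV_add[OF d1 d2], of 2] d3]
       DERIV_const[of "(2 + sqrt 2 - ln (1 - cc)) / 2"]]
    by simp
  moreover have "(-1/(1-y) + 1/(1-cc+y))/2 - 1/(sqrt 2*(1-y)^2) = -(Wf y)/(1-y)"
    unfolding Wf_def
    by (rule alg1) (use a in \<open>auto simp: cc_def\<close>)
  ultimately show ?thesis by simp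
qed

lemma cc_eq: "1 - cc = sqrt 2 - 1" by (simp add: cc_def)

lemma ff_cont: "continuous_on {0..cc} ff"
proof (rule DERIV_atLeastAtMost_imp_continuous_on)
  fix x :: real assume "0 \<le> x" "x \<le> cc"
  then have "cc - 1 < x" "x < 1" using cc_bounds by auto
  then show "\<exists>y. (ff has_real_derivative y) (at x)" using ff_deriv by blast
qed

lemma Wf_mono:
  assumes "0 \<le> y1" "y1 \<le> y2" "y2 \<le> cc"
  shows "Wf y1 \<le> Wf y2"
proof -
  have "1/(1-y1) \<le> 1/(1-y2)" using assms cc_bounds by (intro divide_left_mono) auto
  moreover have "1/(1-cc+y2) \<le> 1/(1-cc+y1)" using assms cc_bounds by (intro divide_left_mono) auto
  ultimately show ?thesis unfolding Wf_def by (intro add_left_mono mult_left_mono) auto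
qed

lemma alg_Wge:
  fixes a b y s :: real
  assumes ss: "s*s = 2" and nz: "a \<noteq> 0" "b \<noteq> 0" "s \<noteq> 0" and e: "a = 1 - y" "b = s - 1 + y"
  shows "1 + (1/s)*(1/a - 1/b) - y = y*((3*s-2)*(1-y) + s*y^2)/(s*a*b)"
proof -
  have ss': "\<And>x. s*(s*x) = 2*x" using ss by (metis mult.assoc)
  show ?thesis using nz
    apply (simp add: field_simps power2_eq_square)
    apply (simp add: e algebra_simps ss ss')
    done
qed

lemma Wf_ge:
  assumes "0 \<le> y" "y \<le> cc"
  shows "y \<le> Wf y"
proof -
  have a: "1 - y > 0" "1 - cc + y > 0" "sqrt 2 > 1.414" using assms cc_bounds s_bounds by auto
  have "Wf y - y = y*((3*sqrt 2-2)*(1-y) + sqrt 2*y^2)/(sqrt 2*(1-y)*(1-cc+y))"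
    unfolding Wf_def by (rule alg_Wge) (use a in \<open>auto simp: cc_def\<close>)
  moreover have "y*((3*sqrt 2-2)*(1-y) + sqrt 2*y^2)/(sqrt 2*(1-y)*(1-cc+y)) \<ge> 0"
    using a assms by (intro divide_nonneg_pos mult_nonneg_nonneg add_nonneg_nonneg) auto
  ultimately show ?thesis by simp
qed

lemma ff_decr:
  assumes "0 \<le> a" "a < b" "b \<le> cc"
  shows "ff b < ff a"
proof (rule DERIV_neg_imp_decreasing_open[OF assms(2)])
  fix x assume x: "a < x" "x < b"
  have "0 < x" "x < 1" "cc - 1 < x" using x assms cc_bounds by auto
  moreover have "Wf x > 0" using Wf_ge[of x] x assms by auto
  ultimately show "\<exists>y. (ff has_real_derivative y) (at x) \<and> y < 0"
    using ff_deriv by (intro exI[of _ "-(Wf x)/(1-x)"]) auto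
next
  show "continuous_on {a..b} ff" by (rule continuous_on_subset[OF ff_cont]) (use assms in auto)
qed

lemma ff0: "ff 0 = 1"
proof -
  have "sqrt 2 / 2 = 1 / sqrt (2::real)" by (simp add: field_simps)
  then show ?thesis by (simp add: ff_def field_simps)
qed

lemma ffcc: "ff cc = 0"
proof -
  have e1: "sqrt 2 * (cc - 1) = sqrt 2 - 2" by (simp add: cc_def algebra_simps)
  have e2: "-(2 + sqrt 2)/2 * (sqrt 2 - 2) = (1::real)" by (simp add: algebra_simps)
  have "sqrt 2 - 2 \<noteq> (0::real)" using s_bounds by auto
  then have "1/(sqrt 2 * (cc - 1)) = -(2 + sqrt 2)/2"
    unfolding e1 using e2 by (simp add: divide_eq_eq)
  then show ?thesis unfolding ff_def by (simp add: field_simps del: divide_const_simps)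
qed

lemma ff_range: assumes "0 \<le> y" "y \<le> cc" shows "0 \<le> ff y" "ff y \<le> 1"
proof -
  show "0 \<le> ff y" using ff_decr[of y cc] assms ffcc by (cases "y = cc") auto
  show "ff y \<le> 1" using ff_decr[of 0 y] assms ff0 by (cases "y = 0") auto
qed

lemma ff_inj: assumes "0 \<le> y1" "y1 \<le> cc" "0 \<le> y2" "y2 \<le> cc" "ff y1 = ff y2" shows "y1 = y2"
  using ff_decr[of y1 y2] ff_decr[of y2 y1] assms by (cases y1 y2 rule: linorder_cases) auto

lemma ff_inv:
  assumes "0 \<le> x" "x \<le> 1"
  shows "0 \<le> ff_inv x" "ff_inv x \<le> cc" "ff (ff_inv x) = x"
proof -
  obtain y where y: "0 \<le> y" "y \<le> cc" "ff y = x"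
    using IVT2'[of ff cc x 0] ff_cont ff0 ffcc assms cc_bounds by auto
  have "\<exists>!y. y \<in> {0..cc} \<and> ff y = x"
    using y ff_inj by (intro ex1I[of _ y]) auto
  then have "ff_inv x \<in> {0..cc} \<and> ff (ff_inv x) = x"
    unfolding ff_inv_def by (rule theI')
  then show "0 \<le> ff_inv x" "ff_inv x \<le> cc" "ff (ff_inv x) = x" by auto
qed

lemma ff_inv_ff: assumes "0 \<le> y" "y \<le> cc" shows "ff_inv (ff y) = y"
  using ff_inv[of "ff y"] ff_range[OF assms] ff_inj assms by metis

lemma hh_range: assumes "0 \<le> x" "x \<le> 1" shows "0 \<le> hh x" "hh x \<le> 1"
  using ff_inv[OF assms] ff_range[of "cc - ff_inv x"] unfolding hh_def by auto

lemma alg_U: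
  fixes a b y s :: real
  assumes ss: "s*s = 2" and nz: "a \<noteq> 0" "b \<noteq> 0" "s \<noteq> 0" and e: "a = 1 - y" "b = s - 1 + y"
  shows "-(1 - (s-1)/(a*b))/2 + 1/(s*a) - s/2 = y^2*(s+1)/(2*a*b)"
proof -
  have ss': "\<And>x. s*(s*x) = 2*x" using ss by (metis mult.assoc)
  show ?thesis using nz
    apply (simp add: field_simps power2_eq_square)
    apply (simp add: e algebra_simps ss ss')
    done
qed

lemma U_bound:
  assumes "0 \<le> y" "y \<le> cc"
  shows "1 - ff y \<le> 3 * y^2"
proof -
  define s :: real where "s = sqrt 2"
  define a where "a = 1 - y"
  define b where "b = s - 1 + y"
  have sb: "1.414 < s" "s < 1.415" using s_bounds s_def by auto
  have ccs: "cc = 2 - s" using s_def cc_def by simp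
  have ap: "a > 0" "b > 0" using assms cc_bounds sb ccs a_def b_def by auto
  have ab1: "a * b \<ge> s - 1"
  proof -
    have "a * b - (s - 1) = y * (cc - y)" unfolding a_def b_def ccs by (simp add: algebra_simps)
    moreover have "y * (cc - y) \<ge> 0" using assms by simp
    ultimately show ?thesis by simp
  qed
  define R where "R = a * b / (s - 1)"
  have Rp: "R > 0" using ap sb R_def by simp
  have lnR: "ln (1 - y) + ln (1 - cc + y) - ln (1 - cc) = ln R"
    unfolding R_def using ap sb
    by (simp add: ln_mult ln_div a_def b_def ccs)
  have lnRb: "ln R \<ge> 1 - (s-1)/(a*b)"
  proof -
    have "ln (1/R) \<le> 1/R - 1" using Rp by (intro ln_le_minus_one) simp
    then show ?thesis using Rp ap sb by (simp add: ln_div R_def)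
  qed
  have ffy: "1 - ff y = -(ln (1 - y) + ln (1 - cc + y) - ln (1 - cc))/2 + 1/(s*a) - s/2"
    unfolding ff_def a_def s_def using ap(1) a_def by (simp add: field_simps)
  have "1 - ff y \<le> -(1 - (s-1)/(a*b))/2 + 1/(s*a) - s/2"
    unfolding ffy lnR using lnRb by simp
  also have "\<dots> = y^2*(s+1)/(2*a*b)"
    by (rule alg_U) (use ap sb in \<open>auto simp: s_def a_def b_def\<close>)
  also have "\<dots> \<le> y^2*(s+1)/(2*(s-1))"
    using ab1 ap sb by (intro divide_left_mono mult_nonneg_nonneg) auto
  also have "\<dots> \<le> 3 * y^2"
  proof -
    have h: "(s+1)/(2*(s-1)) \<le> 3" using sb by (simp add: divide_le_eq)
    have "y^2*(s+1)/(2*(s-1)) = y^2 * ((s+1)/(2*(s-1)))" by simp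
    also have "\<dots> \<le> y^2 * 3" by (rule mult_left_mono[OF h]) simp
    finally show ?thesis by simp
  qed
  finally show ?thesis .
qed

lemma W_identity:
  assumes "0 \<le> y" "y \<le> cc"
  shows "1 - ff y + ff (cc - y) = Wf y"
proof -
  have p: "1 - y > 0" "1 - cc + y > 0" using assms cc_bounds by auto
  have e1: "1 - (cc - y) = 1 - cc + y" "1 - cc + (cc - y) = 1 - y" by simp_all
  have e2: "1/(sqrt 2 * (y - 1)) = - (1/sqrt 2) * (1/(1-y))"
    using p by (simp add: field_simps)
  have e4: "cc - y - 1 = -(1 - cc + y)" by simp
  have e3: "1/(sqrt 2 * (cc - y - 1)) = - (1/sqrt 2) * (1/(1-cc+y))"
  proof -
    have g: "\<And>X::real. 1/(sqrt 2 * (-X)) = -(1/sqrt 2)*(1/X)" by simp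
    show ?thesis unfolding e4 by (rule g)
  qed
  show ?thesis unfolding ff_def Wf_def e1 e2 e3 by (simp add: algebra_simps)
qed

lemma telescope_step:
  assumes "0 \<le> z" "z \<le> y" "y \<le> cc"
  shows "ff z - ff y \<le> Wf y * (ln (1 - z) - ln (1 - y))"
proof -
  define psi where "psi t = Wf y * (- ln (1 - t)) + ff t" for t
  have "psi z \<le> psi y"
  proof (rule DERIV_nonneg_imp_nondecreasing[OF assms(2)])
    fix t assume t: "z \<le> t" "t \<le> y"
    have t1: "cc - 1 < t" "t < 1" using t assms cc_bounds by auto
    have dl: "((\<lambda>t. - ln (1 - t)) has_real_derivative (1/(1-t))) (at t)"
      using t1 by (auto intro!: derivative_eq_intros simp: field_simps)
    have "(psi has_real_derivative (Wf y * (1/(1-t)) + (-(Wf t)/(1-t)))) (at t)"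
      unfolding psi_def[abs_def] by (intro DERIV_add DERIV_cmult dl ff_deriv t1)
    moreover have "Wf y * (1/(1-t)) + (-(Wf t)/(1-t)) \<ge> 0"
    proof -
      have "Wf t \<le> Wf y" using Wf_mono t assms by auto
      then have "(Wf y - Wf t)/(1-t) \<ge> 0" using t1 by simp
      then show ?thesis by (simp add: diff_divide_distrib)
    qed
    ultimately show "\<exists>d. (psi has_real_derivative d) (at t) \<and> 0 \<le> d" by blast
  qed
  then show ?thesis unfolding psi_def by (simp add: algebra_simps)
qed

lemma ln_bound: "- ln (1 - cc) \<le> 0.92"
proof -
  have e: "exp (0.46::real) \<ge> 1 + 0.46 + 0.46^2/2" by (rule exp_lower_Taylor_quadratic) simp
  have "exp (0.92::real) = exp 0.46 * exp 0.46" by (simp flip: exp_add)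
  also have "\<dots> \<ge> (1 + 0.46 + 0.46^2/2) * (1 + 0.46 + 0.46^2/2)"
    using e by (intro mult_mono) auto
  moreover have "(1 + 0.46 + 0.46^2/2) * (1 + 0.46 + 0.46^2/2) \<ge> (2.45::real)"
    by (simp add: power2_eq_square)
  ultimately have e2: "exp (0.92::real) \<ge> 2.45" by linarith
  have "1/(1-cc) = sqrt 2 + 1"
  proof -
    have "(sqrt 2 - 1) * (sqrt 2 + 1) = (1::real)" by (simp add: algebra_simps)
    moreover have "sqrt 2 - 1 \<noteq> (0::real)" using s_bounds by auto
    ultimately show ?thesis by (simp add: cc_eq field_simps)
  qed
  then have "- ln (1 - cc) = ln (sqrt 2 + 1)" using cc_bounds by (simp add: ln_div[symmetric] ln_inverse[symmetric] flip: inverse_eq_divide)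
  also have "\<dots> \<le> ln (exp 0.92)" using e2 s_bounds by (subst ln_le_cancel_iff) auto
  finally show ?thesis by simp
qed

lemma Bsum:
  fixes k :: nat and J :: "nat \<Rightarrow> nat"
  assumes k: "k \<ge> 1323"
    and J: "\<And>i. 1 \<le> i \<Longrightarrow> i \<le> k \<Longrightarrow> real (J i) \<ge> real k * hh ((real i - 1)/real k) - 1"
  shows "(\<Sum>i=1..k. 1 / real (k - i + 1 + J i)) \<le> 0.97"
proof -
  have kp: "real k > 0" using k by simp
  define y where "y i = ff_inv ((real i - 1)/real k)" for i
  have yr: "0 \<le> y i \<and> y i \<le> cc \<and> ff (y i) = (real i - 1)/real k" if "1 \<le> i" "i \<le> k+1" for i
  proof -
    have "0 \<le> (real i - 1)/real k" "(real i - 1)/real k \<le> 1" using that kp by (auto simp: divide_le_eq)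
    then show ?thesis unfolding y_def using ff_inv by blast
  qed
  have y1: "y 1 = cc" unfolding y_def using ff_inv_ff[of cc] ffcc cc_bounds by simp
  have yk: "y (k+1) = 0" unfolding y_def using ff_inv_ff[of 0] ff0 cc_bounds kp by simp
  define g where "g i = ln (1 - y i)" for i
  define W where "W i = Wf (y i)" for i
  have main: "1 / real (k - i + 1 + J i) \<le> (21/20) * (g (Suc i) - g i)" if i: "1 \<le> i" "i \<le> k" for i
  proof -
    have yi: "0 \<le> y i" "y i \<le> cc" "ff (y i) = (real i - 1)/real k" using yr[of i] i by auto
    have ys: "0 \<le> y (Suc i)" "y (Suc i) \<le> cc" "ff (y (Suc i)) = real i/real k" using yr[of "Suc i"] i by auto
    have ymono: "y (Suc i) \<le> y i"
    proof (rule ccontr)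
      assume "\<not> ?thesis"
      then have "ff (y (Suc i)) < ff (y i)" using ff_decr[of "y i" "y (Suc i)"] yi ys by auto
      then have "real i / real k < (real i - 1) / real k" using yi ys by simp
      then have "real i < real i - 1" using kp by (simp add: divide_less_cancel)
      then show False by simp
    qed
    have hhi: "hh ((real i - 1)/real k) = ff (cc - y i)" unfolding hh_def y_def by simp
    have Weq: "W i = 1 - (real i - 1)/real k + hh ((real i - 1)/real k)"
      unfolding W_def hhi using W_identity[OF yi(1,2)] yi(3) by simp
    have Nb: "real (k - i + 1 + J i) \<ge> real k * W i - 1"
    proof -
      have kd: "real (k - i) = real k - real i" using i by (simp add: of_nat_diff)
      have "real (k - i + 1 + J i) = real k - (real i - 1) + real (J i)" using kd by simp
      also have "\<dots> \<ge> real k - (real i - 1) + (real k * hh ((real i - 1)/real k) - 1)" using J[OF i] by simp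
      also have "real k - (real i - 1) + (real k * hh ((real i - 1)/real k) - 1) = real k * W i - 1"
        unfolding Weq using kp by (simp add: field_simps)
      finally show ?thesis .
    qed
    have Wy: "y i \<le> W i" unfolding W_def using Wf_ge yi by auto
    have U1: "1/real k \<le> 3 * (y i)^2"
    proof -
      have "1/real k \<le> 1 - ff (y i)" unfolding yi(3) using i kp by (simp add: field_simps)
      also have "\<dots> \<le> 3 * (y i)^2" by (rule U_bound[OF yi(1,2)])
      finally show ?thesis .
    qed
    have kW: "real k * W i \<ge> 21"
    proof (rule ccontr)
      assume "\<not> ?thesis"
      then have lt: "real k * W i < 21" by simp
      have "0 \<le> real k * y i" using yi kp by simp
      moreover have "real k * y i \<le> real k * W i" using Wy kp by simp
      ultimately have "(real k * y i)^2 < 21^2" using lt by (intro power_strict_mono) auto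
      moreover have "(real k * y i)^2 \<ge> real k / 3"
      proof -
        have "real k / 3 = real k^2 * (1 / real k) / 3" using kp by (simp add: power2_eq_square)
        also have "\<dots> \<le> real k^2 * (3 * (y i)^2) / 3" using U1 by (intro divide_right_mono mult_left_mono) auto
        finally show ?thesis by (simp add: power_mult_distrib)
      qed
      ultimately show False using k by simp
    qed
    have t1: "1 / real (k - i + 1 + J i) \<le> (21/20) / (real k * W i)"
    proof -
      have p: "real k * W i - 1 > 0" using kW by simp
      have "1 / real (k - i + 1 + J i) \<le> 1 / (real k * W i - 1)"
        using Nb p by (intro divide_left_mono) auto
      also have "\<dots> \<le> (21/20) / (real k * W i)" using kW p by (simp add: divide_simps)
      finally show ?thesis .
    qed
    have t2: "1 / (real k * W i) \<le> g (Suc i) - g i"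
    proof -
      have "ff (y (Suc i)) - ff (y i) \<le> W i * (g (Suc i) - g i)"
        unfolding W_def g_def by (rule telescope_step) (use ys yi ymono in auto)
      moreover have "ff (y (Suc i)) - ff (y i) = 1 / real k" unfolding ys(3) yi(3) using kp by (simp add: field_simps)
      moreover have "W i > 0"
      proof (rule ccontr)
        assume "\<not> W i > 0"
        then have "real k * W i \<le> 0" using kp by (simp add: mult_nonneg_nonpos)
        then show False using kW by simp
      qed
      ultimately show ?thesis using kp by (simp add: field_simps)
    qed
    have "(21/20)/(real k * W i) = (21/20) * (1/(real k * W i))" by simp
    then show ?thesis using t1 mult_left_mono[OF t2, of "21/20"] by linarith
  qed
  have "(\<Sum>i=1..k. 1 / real (k - i + 1 + J i)) \<le> (\<Sum>i=1..k. (21/20) * (g (Suc i) - g i))"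
    by (rule sum_mono) (use main in auto)
  also have "\<dots> = (21/20) * (g (Suc k) - g 1)"
    by (simp only: sum_distrib_left[symmetric] sum_Suc_diff[of 1 k g])
  also have "g (Suc k) - g 1 = - ln (1 - cc)" using yk y1 unfolding g_def by simp
  also have "(21/20) * (- ln (1 - cc)) \<le> (21/20) * 0.92" using ln_bound by simp
  finally show ?thesis by simp
qed



lemma phi_the:
  fixes x :: "'a \<Rightarrow> real"
  assumes fin: "finite N" and a: "0 < a" and big: "\<not> (\<Sum>w\<in>N. 1 - x w) \<le> a"
    and xN: "\<And>w. w \<in> N \<Longrightarrow> 0 \<le> x w \<and> x w \<le> 1"
  shows "(\<Sum>w\<in>N. max 0 ((THE L. (\<Sum>w\<in>N. max 0 (L - x w)) = a) - x w)) = a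
         \<and> (THE L. (\<Sum>w\<in>N. max 0 (L - x w)) = a) \<le> 1"
proof -
  define phi where "phi L = (\<Sum>w\<in>N. max 0 (L - x w))" for L
  have mono: "phi L1 \<le> phi L2" if "L1 \<le> L2" for L1 L2
    unfolding phi_def using that by (intro sum_mono) auto
  have phi0: "phi 0 = 0" unfolding phi_def using xN by (intro sum.neutral) auto
  have phi1: "phi 1 = (\<Sum>w\<in>N. 1 - x w)" unfolding phi_def using xN by (intro sum.cong) auto
  have cont: "continuous_on {0..1} phi" unfolding phi_def[abs_def] by (intro continuous_intros)
  obtain L where L: "0 \<le> L" "L \<le> 1" "phi L = a"
    using IVT'[of phi 0 a 1] phi0 phi1 a big cont by auto
  have uniq: "L' = L" if "phi L' = a" for L'
  proof (rule ccontr)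
    assume ne: "L' \<noteq> L"
    have strict: "phi L1 < phi L2" if "L1 < L2" "phi L1 = a" for L1 L2
    proof -
      have "\<exists>w\<in>N. 0 < L1 - x w"
      proof (rule ccontr)
        assume "\<not> ?thesis"
        then have "phi L1 = 0" unfolding phi_def by (intro sum.neutral) auto
        then show False using that a by simp
      qed
      then obtain w where w: "w \<in> N" "0 < L1 - x w" by blast
      have lt: "max 0 (L1 - x w) < max 0 (L2 - x w)" using that w by auto
      show ?thesis unfolding phi_def
      proof (rule sum_strict_mono_ex1[OF fin])
        show "\<forall>w\<in>N. max 0 (L1 - x w) \<le> max 0 (L2 - x w)" 
        proof
          fix w show "max 0 (L1 - x w) \<le> max 0 (L2 - x w)"
            by (rule max.mono) (use \<open>L1 < L2\<close> in simp_all)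
        qed
        show "\<exists>w\<in>N. max 0 (L1 - x w) < max 0 (L2 - x w)" using lt w(1) by blast
      qed
    qed
    show False using ne strict[of L L'] strict[of L' L] L that by (cases "L' < L") auto
  qed
  have "(THE L. phi L = a) = L" by (rule the_equality[where P="\<lambda>L. phi L = a", OF L(3) uniq])
  then show ?thesis using L unfolding phi_def by simp
qed

lemma wf_step_other: "w \<notin> N \<Longrightarrow> w \<noteq> u \<Longrightarrow> wf_step x u N w = x w"
  unfolding wf_step_def by (simp add: Let_def)

lemma wf_step_empty: "wf_step x u {} = x"
  unfolding wf_step_def by (auto simp: Let_def)

lemma wf_incr_props:
  fixes x :: "'a \<Rightarrow> real"
  assumes fin: "finite N" and a0: "0 \<le> a"
    and xN: "\<And>w. w \<in> N \<Longrightarrow> 0 \<le> x w \<and> x w \<le> 1" and v: "v \<in> N"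
  shows "0 \<le> wf_incr x N a v \<and> x v + wf_incr x N a v \<le> 1"
    and "\<And>M. (\<forall>w\<in>N. x w \<le> M) \<Longrightarrow> M + a / card N < 1 \<Longrightarrow> x v + wf_incr x N a v \<le> M + a / card N"
proof -
  have Npos: "card N > 0" using fin v card_gt_0_iff by blast
  show "0 \<le> wf_incr x N a v \<and> x v + wf_incr x N a v \<le> 1"
  proof (cases "a \<le> 0")
    case True then show ?thesis using xN[OF v] by (simp add: wf_incr_def)
  next
    case F1: False
    show ?thesis
    proof (cases "(\<Sum>w\<in>N. 1 - x w) \<le> a")
      case True then show ?thesis using F1 xN[OF v] by (simp add: wf_incr_def)
    next
      case False
      then show ?thesis using F1 xN[OF v] phi_the[OF fin _ False xN] by (auto simp: wf_incr_def)
    qed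
  qed
  fix M assume Mb: "\<forall>w\<in>N. x w \<le> M" and Ma: "M + a / card N < 1"
  show "x v + wf_incr x N a v \<le> M + a / card N"
  proof (cases "a \<le> 0")
    case True then show ?thesis using Mb v a0 by (simp add: wf_incr_def)
  next
    case F1: False
    have big: "\<not> (\<Sum>w\<in>N. 1 - x w) \<le> a"
    proof
      assume le: "(\<Sum>w\<in>N. 1 - x w) \<le> a"
      have "(\<Sum>w\<in>N. 1 - M) \<le> (\<Sum>w\<in>N. 1 - x w)" using Mb by (intro sum_mono) auto
      then have "real (card N) * (1 - M) \<le> a" using le by simp
      moreover have "a < real (card N) * (1 - M)" using Ma Npos by (simp add: field_simps)
      ultimately show False by simp
    qed
    define L where "L = (THE L. (\<Sum>w\<in>N. max 0 (L - x w)) = a)"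
    have phiL: "(\<Sum>w\<in>N. max 0 (L - x w)) = a" using phi_the[OF fin _ big xN] F1 L_def by auto
    have LM: "L \<le> M + a / card N"
    proof (rule ccontr)
      assume "\<not> ?thesis"
      then have gt: "L - M > a / card N" by simp
      have "(\<Sum>w\<in>N. L - M) \<le> (\<Sum>w\<in>N. max 0 (L - x w))" using Mb by (intro sum_mono) auto
      then have "real (card N) * (L - M) \<le> a" using phiL by simp
      moreover have "a < real (card N) * (L - M)" using gt Npos by (simp add: field_simps)
      ultimately show False by simp
    qed
    have "wf_incr x N a v = max 0 (L - x v)" using F1 big unfolding wf_incr_def L_def by simp
    moreover have "a / card N \<ge> 0" using a0 by simp
    then have xv: "x v \<le> M + a / card N" using Mb v by force
    ultimately show ?thesis using LM xv by (simp add: max_def)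
  qed
qed

lemma wf_step_facts:
  fixes x :: "'a \<Rightarrow> real"
  assumes fin: "finite N" and uN: "u \<notin> N" and xu: "0 \<le> x u" "x u \<le> 1"
    and xNa: "\<forall>w\<in>N. 0 \<le> x w \<and> x w \<le> 1"
  shows "\<And>w. w \<notin> N \<Longrightarrow> w \<noteq> u \<Longrightarrow> wf_step x u N w = x w"
    and "x u \<le> wf_step x u N u"
    and "\<And>w. w \<in> N \<Longrightarrow> x w \<le> wf_step x u N w \<and> wf_step x u N w \<le> 1"
    and "\<And>M w. (\<forall>v\<in>N. x v \<le> M) \<Longrightarrow> M + (1 - x u) / card N < 1 \<Longrightarrow> w \<in> N
          \<Longrightarrow> wf_step x u N w \<le> M + (1 - x u) / card N"
proof -
  have xN: "\<And>w. w \<in> N \<Longrightarrow> 0 \<le> x w \<and> x w \<le> 1" using xNa by blast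
  have a0: "0 \<le> 1 - x u" using xu by simp
  have P1: "0 \<le> wf_incr x N (1 - x u) v \<and> x v + wf_incr x N (1 - x u) v \<le> 1" if "v \<in> N" for v
    using wf_incr_props(1)[OF fin a0 _ that] xN by blast
  have P2: "x v + wf_incr x N (1 - x u) v \<le> M + (1 - x u) / card N"
    if "v \<in> N" "\<forall>w\<in>N. x w \<le> M" "M + (1 - x u) / card N < 1" for v M
    using wf_incr_props(2)[OF fin a0 _ that(1) that(2,3)] xN by blast
  show "\<And>w. w \<notin> N \<Longrightarrow> w \<noteq> u \<Longrightarrow> wf_step x u N w = x w" by (rule wf_step_other)
  have "wf_step x u N u = x u + (\<Sum>v\<in>N. wf_incr x N (1 - x u) v)"
    using uN unfolding wf_step_def by (simp add: Let_def)
  moreover have "(\<Sum>v\<in>N. wf_incr x N (1 - x u) v) \<ge> 0" using P1 by (intro sum_nonneg) auto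
  ultimately show "x u \<le> wf_step x u N u" by simp
  have eqN: "wf_step x u N w = x w + wf_incr x N (1 - x u) w" if "w \<in> N" for w
    using that unfolding wf_step_def by (simp add: Let_def)
  show "\<And>w. w \<in> N \<Longrightarrow> x w \<le> wf_step x u N w \<and> wf_step x u N w \<le> 1"
    using P1 eqN by auto
  show "\<And>M w. (\<forall>v\<in>N. x v \<le> M) \<Longrightarrow> M + (1 - x u) / card N < 1 \<Longrightarrow> w \<in> N
          \<Longrightarrow> wf_step x u N w \<le> M + (1 - x u) / card N"
    using P2 eqN by auto
qed



fun st :: "('a \<Rightarrow> 'a \<Rightarrow> bool) \<Rightarrow> 'a list \<Rightarrow> ('a \<Rightarrow> real) \<Rightarrow> nat \<Rightarrow> ('a \<Rightarrow> real)" where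
  "st adj L x 0 = x"
| "st adj L x (Suc n) = wf_step (st adj L x n) (L ! n) {v \<in> set (drop (Suc n) L). adj (L ! n) v}"

lemma st_shift: "st adj (u # R) x (Suc n) = st adj R (wf_step x u {v \<in> set R. adj u v}) n"
  by (induction n) auto

lemma pass_st: "distinct L \<Longrightarrow> p < length L \<Longrightarrow> wf_pass adj L x (L ! p) = st adj L x p (L ! p)"
proof (induction L arbitrary: x p)
  case Nil then show ?case by simp
next
  case (Cons u R)
  show ?case
  proof (cases p)
    case 0 then show ?thesis by simp
  next
    case (Suc q)
    have ne: "R ! q \<noteq> u" using Cons.prems Suc by (auto simp: nth_mem)
    have "wf_pass adj (u # R) x ((u # R) ! p) = wf_pass adj R (wf_step x u {v \<in> set R. adj u v}) (R ! q)"
      using Suc ne by simp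
    also have "\<dots> = st adj R (wf_step x u {v \<in> set R. adj u v}) q (R ! q)"
      using Cons Suc by simp
    also have "\<dots> = st adj (u # R) x p ((u # R) ! p)"
      by (simp only: Suc st_shift nth_Cons_Suc)
    finally show ?thesis .
  qed
qed

lemma set_drop_nth: "set (drop n xs) = {xs ! p | p. n \<le> p \<and> p < length xs}"
proof -
  have "set (drop n xs) = {drop n xs ! q | q. q < length xs - n}"
    by (auto simp: in_set_conv_nth)
  also have "\<dots> = {xs ! p | p. n \<le> p \<and> p < length xs}"
  proof (auto, goal_cases)
    case (1 p) then show ?case by (intro exI[of _ "p - n"]) auto
  qed
  finally show ?thesis .
qed

lemma uorder_Suc: "hard_uorder k (Suc m) = hard_uorder k m @ map (\<lambda>i. U (Suc m) i) [1..<k+1]"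
  unfolding hard_uorder_def by simp

lemma uorder_len: "length (hard_uorder k m) = m * k"
  by (induction m) (auto simp: uorder_Suc hard_uorder_def)

lemma uorder_nth: "n < m * k \<Longrightarrow> hard_uorder k m ! n = U (n div k + 1) (n mod k + 1)"
proof (induction m arbitrary: n)
  case 0 then show ?case by (simp add: hard_uorder_def)
next
  case (Suc m)
  show ?case
  proof (cases "n < m * k")
    case True then show ?thesis using Suc by (simp add: uorder_Suc nth_append uorder_len)
  next
    case False
    define r where "r = n - m * k"
    have r: "r < k" "n = m * k + r" using False Suc.prems r_def by auto
    have "n div k = m" using r by (intro div_nat_eqI) (auto simp: algebra_simps)
    moreover have "n mod k = r" using r by simp
    moreover have "map (\<lambda>i. U (Suc m) i) [1..<k+1] ! r = U (Suc m) (r+1)" using r by (simp del: upt_Suc)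
    moreover have "hard_uorder k (Suc m) ! n = map (\<lambda>i. U (Suc m) i) [1..<k+1] ! r"
      using r by (simp add: uorder_Suc nth_append uorder_len)
    ultimately show ?thesis by simp
  qed
qed

lemma div_mod_inj:
  fixes k :: nat assumes "p mod k = q mod k" "p div k = q div k" shows "p = q"
  by (metis assms div_mult_mod_eq)

lemma uorder_distinct: "k \<ge> 1 \<Longrightarrow> distinct (hard_uorder k m)"
  unfolding distinct_conv_nth uorder_len
proof (intro allI impI)
  fix i j assume h: "i < m * k" "j < m * k" "i \<noteq> j"
  show "hard_uorder k m ! i \<noteq> hard_uorder k m ! j"
  proof
    assume "hard_uorder k m ! i = hard_uorder k m ! j"
    then have "i div k = j div k" "i mod k = j mod k" using h by (simp_all add: uorder_nth)
    then show False using div_mod_inj h(3) by blast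
  qed
qed



lemma hard_adj_U:
  assumes "hard_adj k m (U t i) w"
  shows "(\<exists>j. w = V t j) \<or> (\<exists>j. w = U (t+1) j \<and> t + 1 \<le> m) \<or> (\<exists>j. w = U (t - 1) j \<and> t \<ge> 2)"
  using assms unfolding hard_adj_def by (cases w) auto

lemma hard_adj_VV: "\<not> hard_adj k m (V a b) (V c d)"
  unfolding hard_adj_def by simp

lemma hard_adj_UU_self: "\<not> hard_adj k m (U t i) (U t i)"
  unfolding hard_adj_def by simp

definition Jc :: "nat \<Rightarrow> nat \<Rightarrow> nat" where
  "Jc k i = card {j. 1 \<le> j \<and> j \<le> k \<and> real j \<le> of_int \<lfloor>real k * hh ((real i - 1)/real k)\<rfloor>}"

lemma Jc_bound:
  assumes "1 \<le> i" "i \<le> k"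
  shows "real (Jc k i) \<ge> real k * hh ((real i - 1)/real k) - 1"
proof -
  define x where "x = (real i - 1)/real k"
  have x01: "0 \<le> x" "x \<le> 1" using assms unfolding x_def by (auto simp: divide_le_eq)
  define F where "F = \<lfloor>real k * hh x\<rfloor>"
  have F0: "0 \<le> F" unfolding F_def using hh_range[OF x01] by simp
  have Fk: "F \<le> int k" unfolding F_def using hh_range[OF x01]
    by (metis floor_of_nat floor_mono mult_left_le of_nat_0_le_iff)
  have nFk: "nat F \<le> k" using Fk by simp
  have iff: "real j \<le> of_int F \<longleftrightarrow> j \<le> nat F" for j
  proof -
    have "real j \<le> of_int F \<longleftrightarrow> int j \<le> F"
      by (metis of_int_le_iff of_int_of_nat_eq)
    also have "\<dots> \<longleftrightarrow> j \<le> nat F" using F0 by (simp add: le_nat_iff)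
    finally show ?thesis .
  qed
  have "{j. 1 \<le> j \<and> j \<le> k \<and> real j \<le> of_int F} = {1..nat F}"
    using nFk by (auto simp: iff)
  then have "Jc k i = nat F" unfolding Jc_def F_def x_def by simp
  moreover have "real_of_int F > real k * hh x - 1" unfolding F_def by linarith
  ultimately show ?thesis using F0 unfolding x_def by simp
qed

definition Sp :: "nat \<Rightarrow> nat \<Rightarrow> real" where
  "Sp k i = (\<Sum>i'\<in>{1..<i}. 1 / real (k - i' + 1 + Jc k i'))"

lemma Sp_Suc: "1 \<le> i \<Longrightarrow> Sp k (Suc i) = Sp k i + 1 / real (k - i + 1 + Jc k i)"
  unfolding Sp_def by simp

lemma Sp_mono: "i \<le> i' \<Longrightarrow> Sp k i \<le> Sp k i'"
  unfolding Sp_def by (intro sum_mono2) auto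

lemma Sp_nonneg: "0 \<le> Sp k i"
  unfolding Sp_def by (intro sum_nonneg) auto

lemma Sp_final: "k \<ge> 1323 \<Longrightarrow> Sp k (k+1) \<le> 0.97"
proof -
  assume k: "k \<ge> 1323"
  have "Sp k (k+1) = (\<Sum>i=1..k. 1 / real (k - i + 1 + Jc k i))"
    unfolding Sp_def by (intro sum.cong) auto
  also have "\<dots> \<le> 0.97" by (rule Bsum[OF k Jc_bound])
  finally show ?thesis .
qed

lemma L_nth_lt: "n < m * k \<Longrightarrow> (hard_uorder k m @ vs) ! n = U (n div k + 1) (n mod k + 1)"
  by (simp add: nth_append uorder_len uorder_nth)

lemma drop_in_cases:
  assumes "w \<in> set (drop (Suc n) (hard_uorder k m @ vs))"
  shows "(\<exists>p. n < p \<and> p < m * k \<and> w = U (p div k + 1) (p mod k + 1)) \<or> w \<in> set vs"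
proof -
  obtain p where p: "Suc n \<le> p" "p < length (hard_uorder k m @ vs)" "w = (hard_uorder k m @ vs) ! p"
    using assms unfolding set_drop_nth by blast
  show ?thesis
  proof (cases "p < m * k")
    case True then show ?thesis by (intro disjI1 exI[of _ p]) (use p L_nth_lt[of p m k vs] True in auto)
  next
    case False
    then have "w = vs ! (p - m * k)" "p - m * k < length vs" using p by (auto simp: nth_append uorder_len)
    then show ?thesis by auto
  qed
qed

lemma vset_V: "w \<in> hard_vset k m \<Longrightarrow> \<exists>a b. w = V a b"
  unfolding hard_vset_def by auto

lemma N_sub:
  assumes k: "k \<ge> 1" and n: "n < m * k" and vs: "set vs = hard_vset k m"
    and w: "w \<in> {v \<in> set (drop (Suc n) (hard_uorder k m @ vs)). hard_adj k m (U (n div k + 1) (n mod k + 1)) v}"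
  shows "(\<exists>j. w = V (n div k + 1) j) \<or> (\<exists>j. w = U (n div k + 1 + 1) j \<and> n div k + 1 + 1 \<le> m)"
proof -
  have "\<not> (\<exists>j. w = U (n div k + 1 - 1) j \<and> n div k + 1 \<ge> 2)"
  proof
    assume "\<exists>j. w = U (n div k + 1 - 1) j \<and> n div k + 1 \<ge> 2"
    then obtain j where wj: "w = U (n div k) j" "n div k \<ge> 1" by auto
    from drop_in_cases w have "(\<exists>p. n < p \<and> p < m * k \<and> w = U (p div k + 1) (p mod k + 1)) \<or> w \<in> set vs"
      by blast
    then show False
    proof
      assume "\<exists>p. n < p \<and> p < m * k \<and> w = U (p div k + 1) (p mod k + 1)"
      then obtain p where "n < p" "w = U (p div k + 1) (p mod k + 1)" by blast
      moreover have "n div k \<le> p div k" using \<open>n < p\<close> by (intro div_le_mono) simp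
      ultimately show False using wj by simp
    next
      assume "w \<in> set vs"
      then show False using vs wj vset_V by fastforce
    qed
  qed
  then show ?thesis using hard_adj_U[of k m "n div k + 1" "n mod k + 1" w] w by blast
qed

lemma N_fin: "finite {v \<in> set (drop (Suc n) L). P v}" by simp

lemma N_notin: "U t i \<notin> {v \<in> set (drop (Suc n) L). hard_adj k m (U t i) v}"
  using hard_adj_UU_self by auto

lemma N_card:
  assumes k: "k \<ge> 1" and n: "n < m * k" and vs: "set vs = hard_vset k m"
    and tm: "n div k + 1 < m"
  shows "real (k - (n mod k + 1) + 1 + Jc k (n mod k + 1))
     \<le> real (card {v \<in> set (drop (Suc n) (hard_uorder k m @ vs)). hard_adj k m (U (n div k + 1) (n mod k + 1)) v})"
proof -
  define t where "t = n div k + 1"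
  define i where "i = n mod k + 1"
  define N where "N = {v \<in> set (drop (Suc n) (hard_uorder k m @ vs)). hard_adj k m (U t i) v}"
  define JJ where "JJ = {j. 1 \<le> j \<and> j \<le> k \<and> real j \<le> of_int \<lfloor>real k * hh ((real i - 1)/real k)\<rfloor>}"
  have ik: "1 \<le> i" "i \<le> k" using k unfolding i_def by (auto simp: Suc_le_eq)
  have t1: "1 \<le> t" "t + 1 \<le> m" using tm unfolding t_def by auto
  have dropeq: "drop (Suc n) (hard_uorder k m @ vs) = drop (Suc n) (hard_uorder k m) @ vs"
    using n by (simp add: uorder_len)
  have A: "V t ` {i..k} \<subseteq> N"
  proof
    fix w assume "w \<in> V t ` {i..k}"
    then obtain j where j: "w = V t j" "i \<le> j" "j \<le> k" by auto
    have "w \<in> set vs" unfolding vs hard_vset_def using j t1 ik by auto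
    moreover have "hard_adj k m (U t i) w" unfolding hard_adj_def using j t1 ik by auto
    ultimately show "w \<in> N" unfolding N_def dropeq by auto
  qed
  have B: "U (t+1) ` JJ \<subseteq> N"
  proof
    fix w assume "w \<in> U (t+1) ` JJ"
    then obtain j where j: "w = U (t+1) j" "j \<in> JJ" by auto
    have j1: "1 \<le> j" "j \<le> k" using j unfolding JJ_def by auto
    define r where "r = j - 1"
    have rk: "r < k" using j1 unfolding r_def by simp
    define p where "p = t * k + r"
    have pdiv: "p div k = t" "p mod k = j - 1" using rk unfolding p_def r_def by auto
    have "n < t * k"
    proof -
      have "n mod k < k" using k by simp
      moreover have "n = n div k * k + n mod k" by simp
      moreover have "t * k = n div k * k + k" unfolding t_def by simp
      ultimately show ?thesis by linarith
    qed
    then have pn: "n < p" unfolding p_def by simp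
    have pm: "p < m * k"
    proof -
      have "t * k + r < t * k + k" using rk by simp
      also have "\<dots> = (t + 1) * k" by simp
      also have "\<dots> \<le> m * k" using t1 by (intro mult_right_mono) auto
      finally show ?thesis by (simp add: p_def)
    qed
    have "(hard_uorder k m @ vs) ! p = w" using L_nth_lt[OF pm] pdiv j j1 by simp
    then have "w \<in> set (drop (Suc n) (hard_uorder k m @ vs))"
      unfolding set_drop_nth using pn pm by (auto simp: uorder_len intro!: exI[of _ p])
    moreover have "hard_adj k m (U t i) w" unfolding hard_adj_def using j t1 ik unfolding JJ_def by auto
    ultimately show "w \<in> N" unfolding N_def by auto
  qed
  have disj: "V t ` {i..k} \<inter> U (t+1) ` JJ = {}" by auto
  have finN: "finite N" unfolding N_def by simp
  have "card (V t ` {i..k} \<union> U (t+1) ` JJ) \<le> card N" using A B finN by (intro card_mono) auto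
  moreover have "card (V t ` {i..k} \<union> U (t+1) ` JJ) = card (V t ` {i..k}) + card (U (t+1) ` JJ)"
    using disj unfolding JJ_def by (intro card_Un_disjoint) auto
  moreover have "card (V t ` {i..k}) = k - i + 1" using ik by (simp add: card_image inj_on_def)
  moreover have "card (U (t+1) ` JJ) = Jc k i" unfolding Jc_def JJ_def by (simp add: card_image inj_on_def)
  ultimately have "k - i + 1 + Jc k i \<le> card N" by simp
  then show ?thesis unfolding N_def t_def i_def by simp
qed



definition Inv :: "nat \<Rightarrow> nat \<Rightarrow> (hvtx \<Rightarrow> real) \<Rightarrow> nat \<Rightarrow> nat \<Rightarrow> bool" where
  "Inv k m x t i \<longleftrightarrow> (\<forall>w. 0 \<le> x w)
   \<and> (\<forall>t' j. t < t' \<longrightarrow> x (V t' j) = 0)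
   \<and> (\<forall>t' j. t + 1 < t' \<or> m < t' \<longrightarrow> x (U t' j) = 0)
   \<and> (\<forall>t' j. t' < t \<and> t' < m \<longrightarrow> x (V t' j) \<le> Sp k (k+1))
   \<and> (t < m \<longrightarrow> (\<forall>j. x (V t j) \<le> Sp k i \<and> x (U (t+1) j) \<le> Sp k i))
   \<and> (\<forall>j. i \<le> j \<longrightarrow> x (U t j) \<le> Sp k (k+1))
   \<and> (\<forall>j. x (V t j) \<le> 1)"

lemma Sp_one: "Sp k 1 = 0" unfolding Sp_def by simp

lemma inv_init: "Inv k m (\<lambda>_. 0) 1 1"
  unfolding Inv_def using Sp_nonneg by auto

lemma inv_step:
  assumes k: "k \<ge> 1323" and t: "1 \<le> t" "t \<le> m" and i: "1 \<le> i" "i \<le> k"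
    and I: "Inv k m x t i"
    and finN: "finite N" and uN: "U t i \<notin> N"
    and Nsuba: "\<forall>w\<in>N. (\<exists>j. w = V t j) \<or> (\<exists>j. w = U (t+1) j \<and> t + 1 \<le> m)"
    and Ncarda: "t < m \<longrightarrow> real (k - i + 1 + Jc k i) \<le> real (card N)"
  shows "i < k \<Longrightarrow> Inv k m (wf_step x (U t i) N) t (Suc i)"
    and "i = k \<Longrightarrow> Inv k m (wf_step x (U t i) N) (Suc t) 1"
proof -
  have Nsub: "\<And>w. w \<in> N \<Longrightarrow> (\<exists>j. w = V t j) \<or> (\<exists>j. w = U (t+1) j \<and> t + 1 \<le> m)"
    using Nsuba by blast
  have Ncard: "t < m \<Longrightarrow> real (k - i + 1 + Jc k i) \<le> real (card N)" using Ncarda by blast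
  define u where "u = U t i"
  define x' where "x' = wf_step x u N"
  define Bv where "Bv = Sp k (k+1)"
  have Bv: "Bv \<le> 0.97" unfolding Bv_def using Sp_final k by simp
  from I have P1: "\<And>w. 0 \<le> x w"
    and P2: "\<And>t' j. t < t' \<Longrightarrow> x (V t' j) = 0"
    and P3: "\<And>t' j. t + 1 < t' \<or> m < t' \<Longrightarrow> x (U t' j) = 0"
    and P4: "\<And>t' j. t' < t \<Longrightarrow> t' < m \<Longrightarrow> x (V t' j) \<le> Bv"
    and P5: "\<And>j. t < m \<Longrightarrow> x (V t j) \<le> Sp k i \<and> x (U (t+1) j) \<le> Sp k i"
    and P6: "\<And>j. i \<le> j \<Longrightarrow> x (U t j) \<le> Bv"
    and P7: "\<And>j. x (V t j) \<le> 1"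
    unfolding Inv_def Bv_def by blast+
  have SpB: "Sp k i' \<le> Bv" if "i' \<le> k + 1" for i' unfolding Bv_def using Sp_mono that by blast
  have xu: "0 \<le> x u" "x u \<le> 1" using P1 P6[of i] Bv unfolding u_def by auto
  have xN: "0 \<le> x w \<and> x w \<le> 1" if wN: "w \<in> N" for w
  proof -
    consider (a) j where "w = V t j" | (b) j where "w = U (t+1) j" "t + 1 \<le> m" using Nsub[OF wN] by blast
    then show ?thesis
    proof cases
      case a then show ?thesis using P1 P7 by simp
    next
      case b
      then have "x w \<le> Sp k i" using P5 by simp
      also have "\<dots> \<le> Bv" using SpB i by simp
      finally show ?thesis using P1 Bv by simp
    qed
  qed
  have uN': "u \<notin> N" using uN u_def by simp
  have xNa: "\<forall>w\<in>N. 0 \<le> x w \<and> x w \<le> 1" using xN by blast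
  note F = wf_step_facts[OF finN uN' xu xNa]
  have Fo: "x' w = x w" if "w \<notin> N" "w \<noteq> u" for w using F(1) that x'_def by simp
  have FN: "x w \<le> x' w \<and> x' w \<le> 1" if "w \<in> N" for w using F(3) that x'_def by simp
  have Fu: "x u \<le> x' u" using F(2) x'_def by simp
  have Fb: "x' w \<le> Sp k (Suc i)" if tm: "t < m" and w: "w \<in> N" for w
  proof -
    have Nb1: "real (k - i + 1 + Jc k i) \<ge> 1" by simp
    have cN: "real (card N) \<ge> real (k - i + 1 + Jc k i)" using Ncard tm by simp
    have "(1 - x u) / card N \<le> 1 / real (k - i + 1 + Jc k i)"
    proof -
      have "(1 - x u) / card N \<le> 1 / card N" using xu by (intro divide_right_mono) auto
      also have "\<dots> \<le> 1 / real (k - i + 1 + Jc k i)" using cN Nb1 by (intro divide_left_mono) auto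
      finally show ?thesis .
    qed
    then have le: "Sp k i + (1 - x u) / card N \<le> Sp k (Suc i)" using Sp_Suc[OF i(1)] by simp
    have "Sp k (Suc i) \<le> Bv" using SpB i by simp
    then have lt: "Sp k i + (1 - x u) / card N < 1" using le Bv by simp
    have Mb: "\<forall>v\<in>N. x v \<le> Sp k i"
    proof
      fix v assume "v \<in> N"
      then show "x v \<le> Sp k i" using Nsub[of v] P5 tm by auto
    qed
    have "x' w \<le> Sp k i + (1 - x u) / card N" using F(4)[OF Mb lt w] x'_def by simp
    then show ?thesis using le by simp
  qed
  have nonneg: "0 \<le> x' w" for w
  proof (cases "w \<in> N")
    case True then show ?thesis using FN P1[of w] by fastforce
  next
    case False then show ?thesis using Fo[of w] Fu xu P1[of w] by (cases "w = u") auto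
  qed
  have Vother: "x' (V t' j) = x (V t' j)" if "t' \<noteq> t" for t' j
    using Fo[of "V t' j"] Nsub[of "V t' j"] that unfolding u_def by auto
  have Uother: "x' (U t' j) = x (U t' j)" if "t' \<noteq> t + 1 \<or> m < t'" "U t' j \<noteq> u" for t' j
  proof -
    have "U t' j \<notin> N"
    proof
      assume "U t' j \<in> N"
      then obtain j' where "U t' j = U (t+1) j'" "t+1 \<le> m" using Nsub by blast
      then show False using that(1) by auto
    qed
    then show ?thesis using Fo that(2) by simp
  qed
  have Vt1: "x' (V t j) \<le> 1" for j
    using FN[of "V t j"] Fo[of "V t j"] P7[of j] unfolding u_def by (cases "V t j \<in> N") auto
  have Vt: "x' (V t j) \<le> Sp k (Suc i)" if tm: "t < m" for j
  proof (cases "V t j \<in> N")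
    case True then show ?thesis using Fb tm by simp
  next
    case False
    then have "x' (V t j) = x (V t j)" using Fo unfolding u_def by simp
    also have "\<dots> \<le> Sp k i" using P5 tm by simp
    also have "\<dots> \<le> Sp k (Suc i)" using Sp_mono by simp
    finally show ?thesis .
  qed
  have Ut: "x' (U (t+1) j) \<le> Sp k (Suc i)" if tm: "t < m" for j
  proof (cases "U (t+1) j \<in> N")
    case True then show ?thesis using Fb tm by simp
  next
    case False
    then have "x' (U (t+1) j) = x (U (t+1) j)" using Fo unfolding u_def by simp
    also have "\<dots> \<le> Sp k i" using P5 tm by simp
    also have "\<dots> \<le> Sp k (Suc i)" using Sp_mono by simp
    finally show ?thesis .
  qed
  show "i < k \<Longrightarrow> Inv k m (wf_step x (U t i) N) t (Suc i)"
  proof -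
    assume ik: "i < k"
    have Q2: "x' (V t' j) = 0" if "t < t'" for t' j using Vother P2 that by simp
    have Q3: "x' (U t' j) = 0" if "t + 1 < t' \<or> m < t'" for t' j
    proof -
      have "U t' j \<noteq> u" using that t unfolding u_def by auto
      then show ?thesis using Uother P3 that by auto
    qed
    have Q4: "x' (V t' j) \<le> Bv" if "t' < t" "t' < m" for t' j using Vother P4 that by simp
    have Q6: "x' (U t j) \<le> Bv" if "Suc i \<le> j" for j
    proof -
      have "U t j \<noteq> u" using that unfolding u_def by simp
      then have "x' (U t j) = x (U t j)" using Uother by simp
      then show ?thesis using P6 that by simp
    qed
    show ?thesis unfolding Inv_def x'_def[symmetric] u_def[symmetric] Bv_def[symmetric]
      using nonneg Q2 Q3 Q4 Vt Ut Q6 Vt1 by blast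
  qed
  show "i = k \<Longrightarrow> Inv k m (wf_step x (U t i) N) (Suc t) 1"
  proof -
    assume ik: "i = k"
    have Q2: "x' (V t' j) = 0" if "Suc t < t'" for t' j using Vother P2 that by simp
    have Q3: "x' (U t' j) = 0" if "Suc t + 1 < t' \<or> m < t'" for t' j
    proof -
      have "U t' j \<noteq> u" using that t unfolding u_def by auto
      then show ?thesis using Uother P3 that by auto
    qed
    have Q4: "x' (V t' j) \<le> Bv" if "t' < Suc t" "t' < m" for t' j
    proof (cases "t' = t")
      case True
      then have "x' (V t' j) \<le> Sp k (Suc i)" using Vt that by simp
      moreover have "Sp k (Suc k) \<le> Bv" using SpB[of "Suc k"] by simp
      ultimately show ?thesis using ik by simp
    next
      case False then show ?thesis using Vother P4 that by simp
    qed
    have Q5: "x' (V (Suc t) j) \<le> Sp k 1 \<and> x' (U (Suc t + 1) j) \<le> Sp k 1" for j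
    proof -
      have "x' (V (Suc t) j) = 0" using Vother P2 by simp
      moreover have "U (Suc t + 1) j \<noteq> u" unfolding u_def by simp
      then have "x' (U (Suc t + 1) j) = 0" using Uother P3 by simp
      ultimately show ?thesis using Sp_one by simp
    qed
    have Q6: "x' (U (Suc t) j) \<le> Bv" for j
    proof (cases "t < m")
      case True
      then have "x' (U (Suc t) j) \<le> Sp k (Suc i)" using Ut[OF True, of j] by simp
      moreover have "Sp k (Suc k) \<le> Bv" using SpB[of "Suc k"] by simp
      ultimately show ?thesis using ik by simp
    next
      case False
      then have "m < Suc t" using t by simp
      moreover have "U (Suc t) j \<noteq> u" unfolding u_def by simp
      ultimately have "x' (U (Suc t) j) = 0" using Uother P3 by simp
      then show ?thesis using Bv_def Sp_nonneg by simp
    qed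
    have Q7: "x' (V (Suc t) j) \<le> 1" for j using Vother P2 by simp
    show ?thesis unfolding Inv_def x'_def[symmetric] u_def[symmetric] Bv_def[symmetric]
      using nonneg Q2 Q3 Q4 Q5 Q6 Q7 by blast
  qed
qed



lemma st_inv:
  assumes k: "k \<ge> 1323" and vs: "set vs = hard_vset k m"
  shows "n \<le> m * k \<Longrightarrow> Inv k m (st (hard_adj k m) (hard_uorder k m @ vs) (\<lambda>_. 0) n) (n div k + 1) (n mod k + 1)"
proof (induction n)
  case 0 then show ?case using inv_init by simp
next
  case (Suc n)
  have n: "n < m * k" using Suc.prems by simp
  have k1: "k \<ge> 1" using k by simp
  define t where "t = n div k + 1"
  define i where "i = n mod k + 1"
  define L where "L = hard_uorder k m @ vs"
  define N where "N = {v \<in> set (drop (Suc n) L). hard_adj k m (U t i) v}"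
  have IH: "Inv k m (st (hard_adj k m) L (\<lambda>_. 0) n) t i" using Suc n unfolding t_def i_def L_def by simp
  have Ln: "L ! n = U t i" unfolding L_def t_def i_def using L_nth_lt[OF n] by simp
  have stS: "st (hard_adj k m) L (\<lambda>_. 0) (Suc n) = wf_step (st (hard_adj k m) L (\<lambda>_. 0) n) (U t i) N"
    unfolding N_def using Ln by simp
  have "n div k < m" using n by (simp add: less_mult_imp_div_less)
  then have t: "1 \<le> t" "t \<le> m" unfolding t_def by auto
  have i: "1 \<le> i" "i \<le> k" unfolding i_def using k1 by (auto simp: Suc_le_eq)
  have finN: "finite N" unfolding N_def by simp
  have uN: "U t i \<notin> N" unfolding N_def by (rule N_notin)
  have Nsub: "\<forall>w\<in>N. (\<exists>j. w = V t j) \<or> (\<exists>j. w = U (t+1) j \<and> t + 1 \<le> m)"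
  proof
    fix w assume "w \<in> N"
    then show "(\<exists>j. w = V t j) \<or> (\<exists>j. w = U (t+1) j \<and> t + 1 \<le> m)"
      using N_sub[OF k1 n vs, of w] unfolding N_def t_def i_def L_def by simp
  qed
  have Ncard: "t < m \<longrightarrow> real (k - i + 1 + Jc k i) \<le> real (card N)"
    using N_card[OF k1 n vs] unfolding N_def t_def i_def L_def by simp
  note S = inv_step[OF k t i IH finN uN Nsub Ncard]
  show ?case
  proof (cases "i < k")
    case True
    have "Suc n mod k = n mod k + 1" using True unfolding i_def by (simp add: mod_Suc)
    moreover have "Suc n div k = n div k" using True unfolding i_def by (simp add: div_Suc mod_Suc)
    ultimately show ?thesis using S(1)[OF True] stS unfolding L_def t_def i_def by simp
  next
    case False
    then have ik: "i = k" using i by simp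
    have "Suc n mod k = 0" using ik unfolding i_def by (simp add: mod_Suc)
    moreover have "Suc n div k = n div k + 1" using ik unfolding i_def by (simp add: div_Suc mod_Suc)
    ultimately show ?thesis using S(2)[OF ik] stS unfolding L_def t_def i_def by simp
  qed
qed

lemma st_vphase:
  assumes vs: "set vs = hard_vset k m"
  shows "m * k + d \<le> length (hard_uorder k m @ vs) \<Longrightarrow>
    st (hard_adj k m) (hard_uorder k m @ vs) x (m * k + d) = st (hard_adj k m) (hard_uorder k m @ vs) x (m * k)"
proof (induction d)
  case 0 then show ?case by simp
next
  case (Suc d)
  define L where "L = hard_uorder k m @ vs"
  have dl: "d < length vs" using Suc.prems by (simp add: uorder_len)
  have Ld: "L ! (m * k + d) \<in> set vs" unfolding L_def using dl by (simp add: nth_append uorder_len)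
  then obtain a b where ab: "L ! (m * k + d) = V a b" using vs vset_V by blast
  have "set (drop (Suc (m * k + d)) L) \<subseteq> set vs" unfolding L_def
    by (simp add: uorder_len set_drop_subset)
  then have "{v \<in> set (drop (Suc (m * k + d)) L). hard_adj k m (L ! (m * k + d)) v} = {}"
    using ab vs vset_V hard_adj_VV by fastforce
  then have "st (hard_adj k m) L x (Suc (m * k + d)) = st (hard_adj k m) L x (m * k + d)"
    by (simp only: st.simps wf_step_empty)
  then show ?case using Suc unfolding L_def by simp
qed

lemma Inv_P6: "Inv k m x t i \<Longrightarrow> i \<le> j \<Longrightarrow> x (U t j) \<le> Sp k (k+1)"
  unfolding Inv_def by blast

lemma Inv_P4: "Inv k m x t i \<Longrightarrow> t' < t \<Longrightarrow> t' < m \<Longrightarrow> x (V t' j) \<le> Sp k (k+1)"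
  unfolding Inv_def by blast

theorem lemma3p3:
  shows "\<exists>k0::nat. \<forall>k\<ge>k0. \<forall>m::nat. \<forall>vs.
           distinct vs \<and> set vs = hard_vset k m \<longrightarrow>
           (\<forall>t\<in>{1..m}. \<forall>i\<in>{1..k}. hard_pass k m vs (U t i) < 1) \<and>
           (\<forall>t\<in>{1..m-1}. \<forall>i\<in>{1..k}. hard_pass k m vs (V t i) < 1)"
proof (intro exI[of _ 1323] allI impI)
  fix k m :: nat and vs
  assume k: "1323 \<le> k" and hv: "distinct vs \<and> set vs = hard_vset k m"
  have vs: "set vs = hard_vset k m" and dvs: "distinct vs" using hv by auto
  have k1: "k \<ge> 1" using k by simp
  define L where "L = hard_uorder k m @ vs"
  have Bv: "Sp k (k+1) \<le> 0.97" using Sp_final k by simp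
  have disj: "set (hard_uorder k m) \<inter> set vs = {}"
  proof -
    have "w \<notin> set vs" if wu: "w \<in> set (hard_uorder k m)" for w
    proof -
      obtain p where "p < length (hard_uorder k m)" "w = hard_uorder k m ! p"
        using wu unfolding in_set_conv_nth by blast
      then have "p < m * k" "w = hard_uorder k m ! p" by (simp_all add: uorder_len)
      then have "w = U (p div k + 1) (p mod k + 1)" using uorder_nth by simp
      moreover have "\<forall>a b. U a b \<notin> set vs" using vs vset_V by blast
      ultimately show ?thesis by simp
    qed
    then show ?thesis by blast
  qed
  have dL: "distinct L" unfolding L_def using uorder_distinct[OF k1] dvs disj by simp
  have lenL: "length L = m * k + length vs" unfolding L_def by (simp add: uorder_len)
  have pass: "hard_pass k m vs (L ! p) = st (hard_adj k m) L (\<lambda>_. 0) p (L ! p)" if "p < length L" for p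
    unfolding hard_pass_def L_def[symmetric] using pass_st[OF dL that] .
  show "(\<forall>t\<in>{1..m}. \<forall>i\<in>{1..k}. hard_pass k m vs (U t i) < 1) \<and>
        (\<forall>t\<in>{1..m-1}. \<forall>i\<in>{1..k}. hard_pass k m vs (V t i) < 1)"
  proof (intro conjI ballI)
    fix t i assume t: "t \<in> {1..m}" and i: "i \<in> {1..k}"
    define p where "p = (t - 1) * k + (i - 1)"
    have rk: "i - 1 < k" using i by auto
    have pdm: "p div k = t - 1" "p mod k = i - 1" unfolding p_def using rk by auto
    have pm: "p < m * k"
    proof -
      have "p < (t - 1) * k + k" unfolding p_def using rk by simp
      also have "\<dots> = t * k" using t by (cases t) auto
      also have "\<dots> \<le> m * k" using t by simp
      finally show ?thesis .
    qed
    have Lp: "L ! p = U t i" unfolding L_def using L_nth_lt[OF pm] pdm t i by auto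
    have tt: "p div k + 1 = t" "p mod k + 1 = i" using pdm t i by auto
    have I: "Inv k m (st (hard_adj k m) L (\<lambda>_. 0) p) t i"
      using st_inv[OF k vs, of p] pm unfolding L_def tt by simp
    then have "st (hard_adj k m) L (\<lambda>_. 0) p (U t i) \<le> Sp k (k+1)" by (rule Inv_P6) simp
    then show "hard_pass k m vs (U t i) < 1" using pass[of p] pm lenL Lp Bv by simp
  next
    fix t i assume t: "t \<in> {1..m-1}" and i: "i \<in> {1..k}"
    have "V t i \<in> set vs" unfolding vs hard_vset_def using t i by auto
    then obtain q where q: "q < length vs" "vs ! q = V t i" by (auto simp: in_set_conv_nth)
    define p where "p = m * k + q"
    have Lp: "L ! p = V t i" unfolding L_def p_def using q by (simp add: nth_append uorder_len)
    have pl: "p < length L" using q lenL p_def by simp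
    have "st (hard_adj k m) L (\<lambda>_. 0) p = st (hard_adj k m) L (\<lambda>_. 0) (m * k)"
      unfolding p_def L_def by (rule st_vphase[OF vs]) (use pl lenL p_def L_def in simp)
    moreover have I: "Inv k m (st (hard_adj k m) L (\<lambda>_. 0) (m * k)) (m + 1) 1"
      using st_inv[OF k vs, of "m * k"] k1 unfolding L_def by simp
    have tm: "t < m + 1" "t < m" using t by auto
    have "st (hard_adj k m) L (\<lambda>_. 0) (m * k) (V t i) \<le> Sp k (k+1)"
      by (rule Inv_P4[OF I tm])
    ultimately show "hard_pass k m vs (V t i) < 1" using pass[OF pl] Lp Bv by simp
  qed
qed

end
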